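(* Let $(\mathsf K,\mathsf D)$ be a differential ring, $n\ge1$, $L=\sum_{i=0}^n\binom{n}{i}a_i\mathsf D^{n-i}\in\mathsf K\langle\mathsf D\rangle$ with $a_0=1$, and $f\in\mathsf K^\times$. Put $u:=f^{-1}\mathsf D(f)$ and write $$f^{-1}Lf=\sum_{k=0}^n\binom nk\tilde a_k\mathsf D^{n-k}.$$ Then for each $k=0,1,\dots,n$, $$\tilde a_k=\sum_{j=0}^k\binom kj\,(f^{-1}a_{k-j}f)\,P_j(u).$$
   Context: $(\mathsf K,\mathsf D)$: unital associative ring with derivation; $\mathsf K\langle\mathsf D\rangle$: Ore algebra, coefficients on the left, $\mathsf D a=a\mathsf D+\mathsf D(a)$. For $u\in\mathsf K$ the noncommutative Bell polynomials $P_m(u)\in\mathsf K$ are defined by $P_0(u)=1$, $P_{m+1}(u)=\mathsf D(P_m(u))+u\,P_m(u)$. *)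

theory Defs
  imports Main
begin

definition derivation :: "('a::ring_1 \<Rightarrow> 'a) \<Rightarrow> bool" where
  "derivation D \<longleftrightarrow> (\<forall>a b. D (a + b) = D a + D b) \<and> (\<forall>a b. D (a * b) = D a * b + a * D b)"

text \<open>Elements of the Ore algebra K<D> are represented by coefficient functions
  p :: nat => 'a, p k being the (left) coefficient of D^k.\<close>

definition ore_scal :: "'a::ring_1 \<Rightarrow> nat \<Rightarrow> 'a" where
  "ore_scal c = (\<lambda>k. if k = 0 then c else 0)"

text \<open>Left multiplication by D, using D a = a D + D(a):
  D (sum_k p_k D^k) = sum_k (p_k D^(k+1) + D(p_k) D^k).\<close>
definition ore_Dmul :: "('a::ring_1 \<Rightarrow> 'a) \<Rightarrow> (nat \<Rightarrow> 'a) \<Rightarrow> nat \<Rightarrow> 'a" where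
  "ore_Dmul D p = (\<lambda>k. (if k = 0 then 0 else p (k - 1)) + D (p k))"

definition ore_mul :: "('a::ring_1 \<Rightarrow> 'a) \<Rightarrow> nat \<Rightarrow> (nat \<Rightarrow> 'a) \<Rightarrow> (nat \<Rightarrow> 'a) \<Rightarrow> nat \<Rightarrow> 'a" where
  "ore_mul D n p q = (\<lambda>k. \<Sum>i\<le>n. p i * ((ore_Dmul D ^^ i) q) k)"

primrec bellP :: "('a::ring_1 \<Rightarrow> 'a) \<Rightarrow> 'a \<Rightarrow> nat \<Rightarrow> 'a" where
  "bellP D u 0 = 1"
| "bellP D u (Suc m) = D (bellP D u m) + u * bellP D u m"

end

theory Submission
  imports Defs
begin

lemma der_zero: "derivation D \<Longrightarrow> D 0 = 0"
proof -
  assume d: "derivation D"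
  have "D (0 + 0) = D 0 + D 0" using d unfolding derivation_def by blast
  thus ?thesis by simp
qed

lemma der_ofnat: "derivation D \<Longrightarrow> D (of_nat c * x) = of_nat c * D x"
proof (induction c)
  case 0 then show ?case by (simp add: der_zero)
next
  case (Suc c)
  have "D (of_nat (Suc c) * x) = D (x + of_nat c * x)" by (simp add: distrib_right)
  also have "\<dots> = D x + D (of_nat c * x)" using Suc.prems unfolding derivation_def by blast
  finally show ?case using Suc by (simp add: distrib_right)
qed

lemma dmul_scal: "derivation D \<Longrightarrow> ((ore_Dmul D ^^ i) (ore_scal f)) k =
   (if k \<le> i then of_nat (i choose k) * (D ^^ (i - k)) f else 0)"
proof (induction i arbitrary: k)
  case 0 then show ?case by (simp add: ore_scal_def)
next
  case (Suc i)
  have IH: "\<And>k. ((ore_Dmul D ^^ i) (ore_scal f)) k =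
   (if k \<le> i then of_nat (i choose k) * (D ^^ (i - k)) f else 0)" using Suc by blast
  have e: "((ore_Dmul D ^^ Suc i) (ore_scal f)) k = (if k = 0 then 0 else ((ore_Dmul D ^^ i) (ore_scal f)) (k - 1)) + D (((ore_Dmul D ^^ i) (ore_scal f)) k)"
    by (simp add: ore_Dmul_def)
  show ?case
  proof (cases k)
    case 0
    then show ?thesis unfolding e IH using Suc.prems by (simp add: der_ofnat)
  next
    case (Suc k')
    show ?thesis
    proof (cases "k' < i")
      case True
      then obtain r where r: "i - k' = Suc r" "i - k = r" using Suc by (metis Suc_diff_Suc)
      have "((ore_Dmul D ^^ Suc i) (ore_scal f)) k = of_nat (i choose k') * (D ^^ (Suc r)) f + of_nat (i choose k) * D ((D ^^ r) f)"
        unfolding e IH using Suc.prems True Suc r by (simp add: der_ofnat)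
      also have "\<dots> = of_nat (Suc i choose k) * (D ^^ (Suc i - k)) f"
        using Suc r by (simp add: distrib_right)
      finally show ?thesis using Suc True by simp
    next
      case False
      show ?thesis unfolding e IH using Suc.prems False Suc
        by (auto simp add: der_ofnat der_zero)
    qed
  qed
qed

lemma ore_scal_0: "ore_scal c 0 = c" by (simp add: ore_scal_def)

lemma bell_f: "derivation D \<Longrightarrow> f * finv = 1 \<Longrightarrow> f * bellP D (finv * D f) j = (D ^^ j) f"
proof (induction j)
  case 0 then show ?case by simp
next
  case (Suc j)
  have "f * bellP D (finv * D f) (Suc j) = f * D (bellP D (finv * D f) j) + D f * bellP D (finv * D f) j"
    using Suc.prems by (simp add: distrib_left mult.assoc[symmetric])
  also have "\<dots> = D (f * bellP D (finv * D f) j)"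
    using Suc.prems unfolding derivation_def by (simp add: add.commute)
  finally show ?case using Suc by simp
qed

lemma ofnat_mm: "(of_nat c :: 'a::ring_1) * x * (of_nat d * y) = of_nat (c*d) * (x * y)"
  by (metis mult.assoc mult_of_nat_commute of_nat_mult)

theorem mainTheorem3:
  fixes D :: "'a::ring_1 \<Rightarrow> 'a" and n :: nat and a :: "nat \<Rightarrow> 'a" and f finv :: 'a
  assumes "derivation D"
    and "n \<ge> 1"
    and "a 0 = 1"
    and "f * finv = 1" and "finv * f = 1"
  defines "L \<equiv> (\<lambda>m. if m \<le> n then of_nat (n choose (n - m)) * a (n - m) else 0)"
    and "u \<equiv> finv * D f"
  shows "(\<forall>m>n. ore_mul D 0 (ore_scal finv) (ore_mul D n L (ore_scal f)) m = 0) \<and>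
         (\<forall>k\<le>n. ore_mul D 0 (ore_scal finv) (ore_mul D n L (ore_scal f)) (n - k)
                 = of_nat (n choose k) *
                   (\<Sum>j\<le>k. of_nat (k choose j) * (finv * a (k - j) * f) * bellP D u j))"
proof -
  have M: "ore_mul D 0 (ore_scal finv) (ore_mul D n L (ore_scal f)) m =
     finv * (\<Sum>i\<le>n. L i * (if m \<le> i then of_nat (i choose m) * (D ^^ (i - m)) f else 0))" for m
    by (simp add: ore_mul_def ore_scal_0 dmul_scal[OF assms(1)])
  have P1: "\<forall>m>n. ore_mul D 0 (ore_scal finv) (ore_mul D n L (ore_scal f)) m = 0"
    unfolding M by simp
  have P2: "ore_mul D 0 (ore_scal finv) (ore_mul D n L (ore_scal f)) (n - k)
                 = of_nat (n choose k) *
                   (\<Sum>j\<le>k. of_nat (k choose j) * (finv * a (k - j) * f) * bellP D u j)" if kn: "k \<le> n" for k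
  proof -
    let ?g = "\<lambda>i. L i * (if n - k \<le> i then of_nat (i choose (n - k)) * (D ^^ (i - (n - k))) f else 0)"
    have s1: "(\<Sum>i\<le>n. ?g i) = (\<Sum>l\<le>n. ?g (n - l))"
      by (rule sum.reindex_bij_witness[where i="\<lambda>l. n - l" and j="\<lambda>l. n - l"]) auto
    have s2: "(\<Sum>l\<le>n. ?g (n - l)) = (\<Sum>l\<le>k. ?g (n - l))"
      by (rule sum.mono_neutral_right) (use kn in auto)
    have s3: "(\<Sum>l\<le>k. ?g (n - l)) = (\<Sum>l\<le>k. of_nat (n choose k) * (of_nat (k choose l) * (a l * (D ^^ (k - l)) f)))"
    proof (rule sum.cong[OF refl])
      fix l assume "l \<in> {..k}"
      hence lk: "l \<le> k" by simp
      have c: "(n choose l) * ((n - l) choose (k - l)) = (n choose k) * (k choose l)"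
        using choose_mult[of l k n] lk kn by simp
      have "?g (n - l) = of_nat (n choose l) * a l * (of_nat ((n - l) choose (k - l)) * (D ^^ (k - l)) f)"
        using lk kn diff_le_mono2[OF lk, of n] by (simp add: L_def binomial_symmetric[of "k - l" "n - l"] Suc_diff_le)
      also have "\<dots> = of_nat ((n choose l) * ((n - l) choose (k - l))) * (a l * (D ^^ (k - l)) f)"
        by (rule ofnat_mm)
      also have "\<dots> = of_nat (n choose k) * (of_nat (k choose l) * (a l * (D ^^ (k - l)) f))"
        unfolding c by (simp add: mult.assoc)
      finally show "?g (n - l) = of_nat (n choose k) * (of_nat (k choose l) * (a l * (D ^^ (k - l)) f))" .
    qed
    have rhs: "(\<Sum>j\<le>k. of_nat (k choose j) * (finv * a (k - j) * f) * bellP D u j)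
        = (\<Sum>l\<le>k. of_nat (k choose (k - l)) * (finv * a l * f) * bellP D u (k - l))"
      by (rule sum.reindex_bij_witness[where i="\<lambda>l. k - l" and j="\<lambda>l. k - l"]) auto
    have rhs2: "\<dots> = (\<Sum>l\<le>k. finv * (of_nat (k choose l) * (a l * (D ^^ (k - l)) f)))"
    proof (rule sum.cong[OF refl])
      fix l assume "l \<in> {..k}"
      hence lk: "l \<le> k" by simp
      have "of_nat (k choose (k - l)) * (finv * a l * f) * bellP D u (k - l)
          = of_nat (k choose l) * (finv * a l * (f * bellP D u (k - l)))"
        using lk by (simp only: binomial_symmetric[OF lk, symmetric] mult.assoc)
      also have "\<dots> = finv * (of_nat (k choose l) * (a l * (D ^^ (k - l)) f))"
        unfolding u_def bell_f[OF assms(1) assms(4)] by (simp only: mult.assoc[symmetric] mult_of_nat_commute[of _ finv])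
      finally show "of_nat (k choose (k - l)) * (finv * a l * f) * bellP D u (k - l)
          = finv * (of_nat (k choose l) * (a l * (D ^^ (k - l)) f))" .
    qed
    show ?thesis
      unfolding M s1 s2 s3 rhs rhs2 sum_distrib_left
      by (simp only: mult.assoc[symmetric] mult_of_nat_commute[of _ finv])
  qed
  show ?thesis using P1 P2 by blast
qed

end
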